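(* Let $A,\Delta A\in\mathbb{R}^{n\times m}$, $\widetilde A=A+\Delta A$, $1\le r<\min\{n,m\}$, and assume $\sigma_r-\widetilde\sigma_{r+1}>0$ and $\widetilde\sigma_r-\sigma_{r+1}>0$. Let $H_1\in\mathbb{R}^{(n-r)\times r}$, $H_2\in\mathbb{R}^{(m-r)\times r}$, $H_3\in\mathbb{R}^{r\times (m-r)}$, $H_4\in\mathbb{R}^{r\times(n-r)}$ be arbitrary, and set $B_1=F_U^{21}\circ(H_1\widetilde\Sigma_1)$, $B_2=F_U^{21}\circ(\Sigma_2H_2)$, $B_3=F_U^{12}\circ(H_3\widetilde\Sigma_2^T)$, $B_4=F_U^{12}\circ(\Sigma_1H_4)$. Then for $p\in\{2,\infty\}$, \[\|B_1\|_p\le\frac{\widetilde\sigma_r}{\widetilde\sigma_r^2-\sigma_{r+1}^2}\|H_1\|_p,\quad \|B_2\|_p\le\frac{\sigma_{r+1}}{\widetilde\sigma_r^2-\sigma_{r+1}^2}\|H_2\|_p,\] \[\|B_3\|_p\le\frac{\widetilde\sigma_{r+1}}{\sigma_r^2-\widetilde\sigma_{r+1}^2}\|H_3\|_p,\quad \|B_4\|_p\le\frac{\sigma_{r}}{\sigma_r^2-\widetilde\sigma_{r+1}^2}\|H_4\|_p.\]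
   Context: $\sigma_1\ge\sigma_2\ge\dots$ and $\widetilde\sigma_1\ge\widetilde\sigma_2\ge\dots$ are the singular values of $A$ and $\widetilde A$, with $\sigma_i=\widetilde\sigma_i=0$ for $i>\min\{n,m\}$. $\Sigma_1=\mathrm{diag}(\sigma_1,\dots,\sigma_r)$, $\widetilde\Sigma_1=\mathrm{diag}(\widetilde\sigma_1,\dots,\widetilde\sigma_r)$; $\Sigma_2,\widetilde\Sigma_2\in\mathbb{R}^{(n-r)\times(m-r)}$ are rectangular diagonal matrices with diagonals $\sigma_{r+1},\sigma_{r+2},\dots$ and $\widetilde\sigma_{r+1},\widetilde\sigma_{r+2},\dots$. $F_U^{12}\in\mathbb{R}^{r\times(n-r)}$ has entries $(F_U^{12})_{i,j-r}=1/(\widetilde\sigma_j^2-\sigma_i^2)$ for $1\le i\le r<j\le n$; $F_U^{21}\in\mathbb{R}^{(n-r)\times r}$ has entries $(F_U^{21})_{i-r,j}=1/(\widetilde\sigma_j^2-\sigma_i^2)$ for $r<i\le n$, $1\le j\le r$. $\circ$ is the Hadamard product. $\|\cdot\|_p$ is the Schatten $p$-norm, so $\|\cdot\|_2$ is the Frobenius norm and $\|\cdot\|_\infty$ the spectral norm. *)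

theory Defs
  imports "Jordan_Normal_Form.Matrix"
begin

(* Matrices are Jordan_Normal_Form matrices (0-based entries). Singular values are
   indexed 1-based as in the paper: s 1 \<ge> s 2 \<ge> ... ; the value s 0 is irrelevant. *)

definition rect_diag :: "nat \<Rightarrow> nat \<Rightarrow> (nat \<Rightarrow> real) \<Rightarrow> real mat" where
  "rect_diag n m d = mat n m (\<lambda>(i,j). if i = j then d i else 0)"

definition singular_values_of :: "real mat \<Rightarrow> (nat \<Rightarrow> real) \<Rightarrow> bool" where
  "singular_values_of A s \<longleftrightarrow>
     (let n = dim_row A; m = dim_col A in
       (\<forall>i j. 1 \<le> i \<longrightarrow> i \<le> j \<longrightarrow> s j \<le> s i) \<and>
       (\<forall>i. 1 \<le> i \<longrightarrow> 0 \<le> s i) \<and>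
       (\<forall>i. min n m < i \<longrightarrow> s i = 0) \<and>
       (\<exists>U V. U \<in> carrier_mat n n \<and> V \<in> carrier_mat m m \<and>
              transpose_mat U * U = 1\<^sub>m n \<and> transpose_mat V * V = 1\<^sub>m m \<and>
              A = U * rect_diag n m (\<lambda>i. s (i + 1)) * transpose_mat V))"

definition Sig1 :: "nat \<Rightarrow> (nat \<Rightarrow> real) \<Rightarrow> real mat" where
  "Sig1 r s = rect_diag r r (\<lambda>i. s (i + 1))"

definition Sig2 :: "nat \<Rightarrow> nat \<Rightarrow> nat \<Rightarrow> (nat \<Rightarrow> real) \<Rightarrow> real mat" where
  "Sig2 n m r s = rect_diag (n - r) (m - r) (\<lambda>i. s (r + i + 1))"

(* F_U^{12} : r x (n-r), entry (i, j-r) = 1/(st_j^2 - s_i^2), 1<=i<=r<j<=n *)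
definition FU12 :: "nat \<Rightarrow> nat \<Rightarrow> (nat \<Rightarrow> real) \<Rightarrow> (nat \<Rightarrow> real) \<Rightarrow> real mat" where
  "FU12 n r s st = mat r (n - r) (\<lambda>(a,b). 1 / ((st (r + b + 1))\<^sup>2 - (s (a + 1))\<^sup>2))"

(* F_U^{21} : (n-r) x r, entry (i-r, j) = 1/(st_j^2 - s_i^2), r<i<=n, 1<=j<=r *)
definition FU21 :: "nat \<Rightarrow> nat \<Rightarrow> (nat \<Rightarrow> real) \<Rightarrow> (nat \<Rightarrow> real) \<Rightarrow> real mat" where
  "FU21 n r s st = mat (n - r) r (\<lambda>(a,b). 1 / ((st (b + 1))\<^sup>2 - (s (r + a + 1))\<^sup>2))"

definition hadamard :: "real mat \<Rightarrow> real mat \<Rightarrow> real mat" where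
  "hadamard A B = mat (dim_row A) (dim_col A) (\<lambda>(i,j). A $$ (i,j) * B $$ (i,j))"

definition vec_norm :: "real vec \<Rightarrow> real" where
  "vec_norm v = sqrt (v \<bullet> v)"

(* Schatten 2-norm = Frobenius norm *)
definition frob_norm :: "real mat \<Rightarrow> real" where
  "frob_norm B = sqrt (\<Sum>i<dim_row B. \<Sum>j<dim_col B. (B $$ (i,j))\<^sup>2)"

(* Schatten infinity-norm = spectral (operator 2-) norm *)
definition spec_norm :: "real mat \<Rightarrow> real" where
  "spec_norm B = Sup {vec_norm (B *\<^sub>v x) | x. x \<in> carrier_vec (dim_col B) \<and> vec_norm x = 1}"

end

theory Submission imports Defs "HOL-Analysis.L2_Norm" begin
lemma vec_norm_L2: "vec_norm v = L2_set (\<lambda>i. v$i) {0..<dim_vec v}"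
  unfolding vec_norm_def scalar_prod_def L2_set_def by (simp add: power2_eq_square)

lemma L2_abs: "L2_set (\<lambda>i. \<bar>f i\<bar>) A = L2_set f A"
  unfolding L2_set_def by simp

lemma cs_vec:
  assumes "dim_vec v = dim_vec w"
  shows "\<bar>v \<bullet> w\<bar> \<le> vec_norm v * vec_norm w"
proof -
  have "\<bar>v \<bullet> w\<bar> \<le> (\<Sum>i\<in>{0..<dim_vec w}. \<bar>v$i\<bar> * \<bar>w$i\<bar>)"
    unfolding scalar_prod_def by (rule order_trans[OF sum_abs]) (simp add: abs_mult)
  also have "\<dots> \<le> L2_set (\<lambda>i. v$i) {0..<dim_vec w} * L2_set (\<lambda>i. w$i) {0..<dim_vec w}"
    by (rule L2_set_mult_ineq)
  finally show ?thesis using assms by (simp add: vec_norm_L2)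
qed

lemma sum_pad_le:
  fixes f :: "nat \<Rightarrow> real"
  assumes "\<And>i. 0 \<le> f i"
  shows "(\<Sum>i<a'. if i < a then f i else 0) \<le> (\<Sum>i<a. f (i::nat))"
proof -
  have "(\<Sum>i<a'. if i < a then f i else 0) = (\<Sum>i\<in>{..<a'} \<inter> {i. i < a}. f i)"
    by (simp add: sum.inter_restrict)
  also have "\<dots> \<le> (\<Sum>i<a. f i)"
    by (rule sum_mono2) (auto simp: assms)
  finally show ?thesis .
qed

lemma L2_pad_le:
  "L2_set (\<lambda>i. if i < a then v i else 0) {0..<a'} \<le> L2_set v {0..<(a::nat)}"
proof -
  have "(\<Sum>i\<in>{0..<a'}. (if i < a then v i else 0)\<^sup>2) = (\<Sum>i<a'. if i < a then (v i)\<^sup>2 else 0)"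
    by (rule sum.cong) (auto simp: atLeast0LessThan)
  also have "\<dots> \<le> (\<Sum>i<a. (v i)\<^sup>2)" by (rule sum_pad_le) simp
  finally show ?thesis unfolding L2_set_def by (simp add: atLeast0LessThan)
qed

lemma abs_le_unit:
  assumes "vec_norm x = 1" "j < dim_vec x"
  shows "\<bar>x$j\<bar> \<le> 1"
proof -
  have "\<bar>x$j\<bar> \<le> L2_set (\<lambda>i. \<bar>x$i\<bar>) {0..<dim_vec x}"
    by (rule member_le_L2_set) (use assms in auto)
  then show ?thesis using assms by (simp add: L2_abs vec_norm_L2)
qed

lemma mat_vec_bound:
  assumes H: "H \<in> carrier_mat a b" and x: "x \<in> carrier_vec b" and u: "vec_norm x = 1"
  shows "vec_norm (H *\<^sub>v x) \<le> (\<Sum>i<a. \<Sum>j<b. \<bar>H$$(i,j)\<bar>)"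
proof -
  have "vec_norm (H *\<^sub>v x) = L2_set (\<lambda>i. (H *\<^sub>v x)$i) {0..<a}"
    using H by (simp add: vec_norm_L2)
  also have "\<dots> \<le> (\<Sum>i\<in>{0..<a}. \<bar>(H *\<^sub>v x)$i\<bar>)"
    by (rule L2_set_le_sum_abs)
  also have "\<dots> \<le> (\<Sum>i<a. \<Sum>j<b. \<bar>H$$(i,j)\<bar>)"
  proof (unfold atLeast0LessThan, rule sum_mono)
    fix i assume i: "i \<in> {..<a}"
    have "\<bar>(H *\<^sub>v x)$i\<bar> = \<bar>\<Sum>j\<in>{0..<b}. H$$(i,j) * x$j\<bar>"
      using H x i by (simp add: scalar_prod_def row_def)
    also have "\<dots> \<le> (\<Sum>j\<in>{0..<b}. \<bar>H$$(i,j) * x$j\<bar>)" by (rule sum_abs)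
    also have "\<dots> \<le> (\<Sum>j\<in>{0..<b}. \<bar>H$$(i,j)\<bar>)"
    proof (rule sum_mono)
      fix j assume "j \<in> {0..<b}"
      then have "\<bar>x$j\<bar> \<le> 1" using abs_le_unit[OF u] x by auto
      then show "\<bar>H$$(i,j) * x$j\<bar> \<le> \<bar>H$$(i,j)\<bar>"
        by (simp add: abs_mult mult_left_le)
    qed
    finally show "\<bar>(H *\<^sub>v x)$i\<bar> \<le> (\<Sum>j<b. \<bar>H$$(i,j)\<bar>)" by (simp add: atLeast0LessThan)
  qed
  finally show ?thesis .
qed

lemma spec_bdd:
  assumes H: "H \<in> carrier_mat a b"
  shows "bdd_above {vec_norm (H *\<^sub>v x) | x. x \<in> carrier_vec (dim_col H) \<and> vec_norm x = 1}"
  using mat_vec_bound[OF H] H unfolding bdd_above_def by auto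

lemma vec_norm_smult: "vec_norm (k \<cdot>\<^sub>v v) = \<bar>k\<bar> * vec_norm v"
proof -
  have "vec_norm (k \<cdot>\<^sub>v v) = L2_set (\<lambda>i. \<bar>k\<bar> * v$i) {0..<dim_vec v}"
    unfolding vec_norm_L2 L2_set_def by (simp add: power_mult_distrib)
  also have "\<dots> = \<bar>k\<bar> * vec_norm v"
    by (simp add: vec_norm_L2 L2_set_right_distrib)
  finally show ?thesis .
qed

lemma vec_norm_nonneg: "0 \<le> vec_norm v" by (simp add: vec_norm_L2)

lemma spec_le:
  assumes H: "H \<in> carrier_mat a b" and z: "z \<in> carrier_vec b"
  shows "vec_norm (H *\<^sub>v z) \<le> spec_norm H * vec_norm z"
proof (cases "vec_norm z = 0")
  case True
  then have "\<forall>i\<in>{0..<b}. z$i = 0" using z by (simp add: vec_norm_L2 L2_set_eq_0_iff)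
  then have "H *\<^sub>v z = 0\<^sub>v a" using z H by (auto intro!: eq_vecI simp: scalar_prod_def)
  then have "vec_norm (H *\<^sub>v z) = 0" by (simp add: vec_norm_def scalar_prod_def)
  then show ?thesis using True by simp
next
  case False
  define x where "x = (1 / vec_norm z) \<cdot>\<^sub>v z"
  have nz: "0 < vec_norm z" using False vec_norm_nonneg[of z] by linarith
  have x: "x \<in> carrier_vec b" using z by (simp add: x_def)
  have u: "vec_norm x = 1" using nz by (simp add: x_def vec_norm_smult)
  have "vec_norm (H *\<^sub>v x) \<le> spec_norm H"
    unfolding spec_norm_def using H x u
    by (intro cSup_upper[OF _ spec_bdd[OF H]]) auto
  moreover have "H *\<^sub>v x = (1 / vec_norm z) \<cdot>\<^sub>v (H *\<^sub>v z)"
    using H z by (simp add: x_def mult_mat_vec)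
  ultimately have "vec_norm (H *\<^sub>v z) / vec_norm z \<le> spec_norm H"
    using nz by (simp add: vec_norm_smult)
  then show ?thesis using nz by (simp add: divide_le_eq mult.commute)
qed

lemma unit_norm: "0 < b \<Longrightarrow> vec_norm (unit_vec b 0) = 1"
proof -
  assume b: "0 < b"
  have "(\<Sum>i = 0..<b. (if i = 0 then 1 else 0) * (if i = 0 then 1 else (0::real))) = (\<Sum>i \<in> {0..<b}. if i = 0 then 1 else 0)"
    by (rule sum.cong) auto
  also have "\<dots> = 1" using b by (simp add: sum.delta)
  finally show ?thesis by (simp add: vec_norm_def scalar_prod_def unit_vec_def)
qed

lemma spec_nonneg:
  assumes H: "H \<in> carrier_mat a b" and b: "0 < b"
  shows "0 \<le> spec_norm H"
proof -
  have "vec_norm (unit_vec b 0) = 1"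
    using b by (rule unit_norm)
  then show ?thesis using spec_le[OF H, of "unit_vec b 0"] vec_norm_nonneg[of "H *\<^sub>v unit_vec b 0"]
    by simp
qed

lemma spec_least:
  assumes b: "0 < dim_col M"
    and h: "\<And>x. x \<in> carrier_vec (dim_col M) \<Longrightarrow> vec_norm x = 1 \<Longrightarrow> vec_norm (M *\<^sub>v x) \<le> C"
  shows "spec_norm M \<le> C"
proof -
  have "vec_norm (unit_vec (dim_col M) 0) = 1"
    using b by (rule unit_norm)
  then show ?thesis unfolding spec_norm_def
    by (intro cSup_least) (use h in \<open>auto intro!: exI[of _ "unit_vec (dim_col M) 0"]\<close>)
qed

lemma sums_abs_le:
  fixes f G :: "nat \<Rightarrow> real"
  assumes "f sums s" "G sums t" "\<And>k. \<bar>f k\<bar> \<le> G k"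
  shows "\<bar>s\<bar> \<le> t"
proof -
  have "s \<le> t" by (rule sums_le[OF _ assms(1,2)]) (use assms(3) in \<open>auto simp: abs_le_iff\<close>)
  moreover have "-t \<le> s" by (rule sums_le[OF _ sums_minus[OF assms(2)] assms(1)]) (metis assms(3) abs_le_iff minus_le_iff)
  ultimately show ?thesis by linarith
qed
lemma core:
  fixes K M :: "real mat" and p q :: "nat \<Rightarrow> nat \<Rightarrow> real" and P Q :: "nat \<Rightarrow> real"
  assumes K: "K \<in> carrier_mat a b" and M: "M \<in> carrier_mat a b" and b: "0 < b"
    and g: "\<And>i j. i < a \<Longrightarrow> j < b \<Longrightarrow> (\<lambda>k. p k i * q k j) sums g i j"
    and Me: "\<And>i j. i < a \<Longrightarrow> j < b \<Longrightarrow> M$$(i,j) = g i j * K$$(i,j)"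
    and P: "\<And>k i. i < a \<Longrightarrow> \<bar>p k i\<bar> \<le> P k" and Q: "\<And>k j. j < b \<Longrightarrow> \<bar>q k j\<bar> \<le> Q k"
    and P0: "\<And>k. 0 \<le> P k"
    and c: "(\<lambda>k. P k * Q k) sums c" and c0: "0 \<le> c"
  shows "frob_norm M \<le> c * frob_norm K \<and> spec_norm M \<le> c * spec_norm K"
proof
  have gb: "\<bar>g i j\<bar> \<le> c" if "i < a" "j < b" for i j
  proof (rule sums_abs_le[OF g[OF that] c])
    fix k
    have "\<bar>p k i * q k j\<bar> = \<bar>p k i\<bar> * \<bar>q k j\<bar>" by (simp add: abs_mult)
    also have "\<dots> \<le> P k * Q k"
      by (rule mult_mono) (use P[OF that(1)] Q[OF that(2)] P0 in auto)
    finally show "\<bar>p k i * q k j\<bar> \<le> P k * Q k" .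
  qed
  have "(\<Sum>i<a. \<Sum>j<b. (M $$ (i,j))\<^sup>2) \<le> (\<Sum>i<a. \<Sum>j<b. c\<^sup>2 * (K $$ (i,j))\<^sup>2)"
  proof (intro sum_mono)
    fix i j assume "i \<in> {..<a}" "j \<in> {..<b}"
    then have ij: "i < a" "j < b" by auto
    have "(g i j)\<^sup>2 \<le> c\<^sup>2" using gb[OF ij] c0 by (metis abs_ge_zero abs_of_nonneg power2_abs power_mono)
    then show "(M $$ (i,j))\<^sup>2 \<le> c\<^sup>2 * (K $$ (i,j))\<^sup>2"
      using Me[OF ij] by (simp add: power_mult_distrib mult_right_mono)
  qed
  also have "\<dots> = c\<^sup>2 * (\<Sum>i<a. \<Sum>j<b. (K $$ (i,j))\<^sup>2)"
    by (simp add: sum_distrib_left)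
  finally have "sqrt (\<Sum>i<a. \<Sum>j<b. (M $$ (i,j))\<^sup>2) \<le> sqrt (c\<^sup>2 * (\<Sum>i<a. \<Sum>j<b. (K $$ (i,j))\<^sup>2))"
    by (rule real_sqrt_le_mono)
  then show "frob_norm M \<le> c * frob_norm K"
    using K M c0 by (simp add: frob_norm_def real_sqrt_mult)
next
  define S where "S = spec_norm K"
  have S0: "0 \<le> S" unfolding S_def by (rule spec_nonneg[OF K b])
  show "spec_norm M \<le> c * spec_norm K"
  proof (rule spec_least)
    show "0 < dim_col M" using M b by simp
    fix x assume x': "x \<in> carrier_vec (dim_col M)" and u: "vec_norm x = 1"
    have x: "x \<in> carrier_vec b" using x' M by simp
    define y where "y = M *\<^sub>v x"
    have y: "y \<in> carrier_vec a" using M x unfolding y_def by (rule mult_mat_vec_carrier)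
    define T where "T k = (\<Sum>i<a. \<Sum>j<b. y$i * x$j * K$$(i,j) * (p k i * q k j))" for k
    have yy: "y \<bullet> y = (\<Sum>i<a. \<Sum>j<b. y$i * x$j * K$$(i,j) * g i j)"
    proof -
      have "y \<bullet> y = (\<Sum>i<a. y$i * (\<Sum>j<b. M$$(i,j) * x$j))"
        using y M x unfolding y_def
        by (simp add: scalar_prod_def row_def atLeast0LessThan)
      also have "\<dots> = (\<Sum>i<a. \<Sum>j<b. y$i * x$j * K$$(i,j) * g i j)"
        by (auto simp: sum_distrib_left Me intro!: sum.cong)
      finally show ?thesis .
    qed
    have Ts: "T sums (y \<bullet> y)"
      unfolding yy T_def
      by (intro sums_sum sums_mult g) auto
    have Tb: "\<bar>T k\<bar> \<le> P k * Q k * (vec_norm y * S)" for k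
    proof -
      define yk where "yk = vec a (\<lambda>i. y$i * p k i)"
      define xk where "xk = vec b (\<lambda>j. x$j * q k j)"
      have xk: "xk \<in> carrier_vec b" by (simp add: xk_def)
      have "T k = yk \<bullet> (K *\<^sub>v xk)"
        using K unfolding T_def yk_def xk_def
        by (auto simp: scalar_prod_def row_def atLeast0LessThan sum_distrib_left intro!: sum.cong)
      then have "\<bar>T k\<bar> \<le> vec_norm yk * vec_norm (K *\<^sub>v xk)"
        using K by (simp add: cs_vec yk_def)
      also have "\<dots> \<le> vec_norm yk * (S * vec_norm xk)"
        by (rule mult_left_mono) (use spec_le[OF K xk] vec_norm_nonneg in \<open>auto simp: S_def\<close>)
      also have "\<dots> \<le> (P k * vec_norm y) * (S * Q k)"
      proof (rule mult_mono)
        have "vec_norm yk = L2_set (\<lambda>i. y$i * p k i) {0..<a}"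
          unfolding vec_norm_L2 yk_def by (rule L2_set_cong) auto
        also have "\<dots> = L2_set (\<lambda>i. \<bar>y$i * p k i\<bar>) {0..<a}" by (simp add: L2_abs)
        also have "\<dots> \<le> L2_set (\<lambda>i. P k * \<bar>y$i\<bar>) {0..<a}"
          by (rule L2_set_mono) (use P in \<open>auto simp: abs_mult mult.commute[of "P k"] intro: mult_left_mono\<close>)
        also have "\<dots> = P k * vec_norm y"
          using y P0[of k] L2_set_right_distrib[of "P k" "\<lambda>i. \<bar>y$i\<bar>"]
          by (simp add: vec_norm_L2 L2_abs)
        finally show "vec_norm yk \<le> P k * vec_norm y" .
        have "vec_norm xk = L2_set (\<lambda>j. x$j * q k j) {0..<b}"
          unfolding vec_norm_L2 xk_def by (rule L2_set_cong) auto
        also have "\<dots> = L2_set (\<lambda>j. \<bar>x$j * q k j\<bar>) {0..<b}" by (simp add: L2_abs)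
        also have "\<dots> \<le> L2_set (\<lambda>j. Q k * \<bar>x$j\<bar>) {0..<b}"
          by (rule L2_set_mono) (use Q in \<open>auto simp: abs_mult mult.commute[of "Q k"] intro: mult_left_mono\<close>)
        also have "\<dots> = Q k * vec_norm x"
          using x Q[of 0 k] b L2_set_right_distrib[of "Q k" "\<lambda>i. \<bar>x$i\<bar>"]
          by (simp add: vec_norm_L2 L2_abs)
        finally have "vec_norm xk \<le> Q k" using u by simp
        then show "S * vec_norm xk \<le> S * Q k" using S0 by (rule mult_left_mono)
        show "0 \<le> P k * vec_norm y" using P0[of k] vec_norm_nonneg[of y] by simp
        show "0 \<le> S * vec_norm xk" using S0 vec_norm_nonneg[of xk] by simp
      qed
      finally show ?thesis by (simp add: algebra_simps)
    qed
    have "\<bar>y \<bullet> y\<bar> \<le> c * (vec_norm y * S)"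
      by (rule sums_abs_le[OF Ts sums_mult2[OF c]]) (use Tb in auto)
    moreover have "0 \<le> y \<bullet> y" by (simp add: scalar_prod_def sum_nonneg)
    ultimately have "(vec_norm y)\<^sup>2 \<le> (c * S) * vec_norm y"
      by (simp add: vec_norm_def algebra_simps)
    then show "vec_norm (M *\<^sub>v x) \<le> c * spec_norm K"
    proof -
      have h: "vec_norm y * vec_norm y \<le> (c * S) * vec_norm y"
        using \<open>(vec_norm y)\<^sup>2 \<le> (c * S) * vec_norm y\<close> by (simp add: power2_eq_square)
      have "vec_norm y \<le> c * S"
      proof (cases "vec_norm y = 0")
        case True then show ?thesis using c0 S0 by simp
      next
        case False
        then have "0 < vec_norm y" using vec_norm_nonneg[of y] by linarith
        then show ?thesis using mult_right_le_imp_le[OF h] by blast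
      qed
      then show ?thesis unfolding y_def S_def .
    qed
  qed
qed
lemma sum_if_lt: "(\<Sum>j<(b'::nat). if j < b then f j else 0) = (\<Sum>j<min b b'. (f j :: real))"
proof -
  have "(\<Sum>j<b'. if j < b then f j else 0) = (\<Sum>j<b'. if j \<in> {j. j < b} then f j else 0)" by simp
  also have "\<dots> = sum f ({..<b'} \<inter> {j. j < b})" by (rule sum.inter_restrict[symmetric]) simp
  also have "{..<b'} \<inter> {j. j < b} = {..<min b b'}" by auto
  finally show ?thesis .
qed

lemma pad_rows:
  assumes H: "H \<in> carrier_mat a b" and b: "0 < b"
  shows "spec_norm (mat a' b (\<lambda>(i,j). if i < a then H$$(i,j) else 0)) \<le> spec_norm H \<and>
         frob_norm (mat a' b (\<lambda>(i,j). if i < a then H$$(i,j) else 0)) \<le> frob_norm H"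
  (is "spec_norm ?K \<le> _ \<and> _")
proof
  show "spec_norm ?K \<le> spec_norm H"
  proof (rule spec_least)
    show "0 < dim_col ?K" using b by simp
    fix x assume x': "x \<in> carrier_vec (dim_col ?K)" and u: "vec_norm x = 1"
    have x: "x \<in> carrier_vec b" using x' by simp
    have "vec_norm (?K *\<^sub>v x) = L2_set (\<lambda>i. if i < a then (H *\<^sub>v x)$i else 0) {0..<a'}"
      unfolding vec_norm_L2 using H x
      by (intro L2_set_cong) (auto simp: scalar_prod_def row_def)
    also have "\<dots> \<le> L2_set (\<lambda>i. (H *\<^sub>v x)$i) {0..<a}" by (rule L2_pad_le)
    also have "\<dots> = vec_norm (H *\<^sub>v x)" using H by (simp add: vec_norm_L2)
    also have "\<dots> \<le> spec_norm H * vec_norm x" by (rule spec_le[OF H x])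
    finally show "vec_norm (?K *\<^sub>v x) \<le> spec_norm H" using u by simp
  qed
  have "(\<Sum>i<a'. \<Sum>j<b. (?K $$ (i,j))\<^sup>2) = (\<Sum>i<a'. if i < a then (\<Sum>j<b. (H $$ (i,j))\<^sup>2) else 0)"
    by (intro sum.cong) auto
  also have "\<dots> \<le> (\<Sum>i<a. \<Sum>j<b. (H $$ (i,j))\<^sup>2)" by (rule sum_pad_le) (simp add: sum_nonneg)
  finally show "frob_norm ?K \<le> frob_norm H" using H by (simp add: frob_norm_def)
qed

lemma pad_cols:
  assumes H: "H \<in> carrier_mat a b" and b': "0 < b'" and b: "0 < b"
  shows "spec_norm (mat a b' (\<lambda>(i,j). if j < b then H$$(i,j) else 0)) \<le> spec_norm H \<and>
         frob_norm (mat a b' (\<lambda>(i,j). if j < b then H$$(i,j) else 0)) \<le> frob_norm H"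
  (is "spec_norm ?K \<le> _ \<and> _")
proof
  show "spec_norm ?K \<le> spec_norm H"
  proof (rule spec_least)
    show "0 < dim_col ?K" using b' by simp
    fix x assume x': "x \<in> carrier_vec (dim_col ?K)" and u: "vec_norm x = 1"
    have x: "x \<in> carrier_vec b'" using x' by simp
    define z where "z = vec b (\<lambda>j. if j < b' then x$j else 0)"
    have z: "z \<in> carrier_vec b" by (simp add: z_def)
    have "?K *\<^sub>v x = H *\<^sub>v z"
    proof (rule eq_vecI)
      fix i assume "i < dim_vec (H *\<^sub>v z)"
      then have i: "i < a" using H by simp
      have "(?K *\<^sub>v x)$i = (\<Sum>j<b'. if j < b then H$$(i,j) * x$j else 0)"
        using i x by (auto simp: scalar_prod_def row_def atLeast0LessThan intro!: sum.cong)
      also have "\<dots> = (\<Sum>j<min b b'. H$$(i,j) * x$j)" by (rule sum_if_lt)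
      also have "\<dots> = (\<Sum>j<b. if j < b' then H$$(i,j) * x$j else 0)" by (simp add: sum_if_lt min.commute)
      also have "\<dots> = (H *\<^sub>v z)$i"
        using i H by (auto simp: scalar_prod_def row_def atLeast0LessThan z_def intro!: sum.cong)
      finally show "(?K *\<^sub>v x)$i = (H *\<^sub>v z)$i" .
    qed (use H in simp)
    also have "vec_norm (H *\<^sub>v z) \<le> spec_norm H * vec_norm z" by (rule spec_le[OF H z])
    also have "\<dots> \<le> spec_norm H * 1"
    proof (rule mult_left_mono)
      have "vec_norm z = L2_set (\<lambda>i. if i < b' then x$i else 0) {0..<b}"
        unfolding vec_norm_L2 z_def by (intro L2_set_cong) auto
      also have "\<dots> \<le> L2_set (\<lambda>i. x$i) {0..<b'}" by (rule L2_pad_le)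
      finally show "vec_norm z \<le> 1" using u x by (simp add: vec_norm_L2)
      show "0 \<le> spec_norm H" using spec_nonneg[OF H b] .
    qed
    finally show "vec_norm (?K *\<^sub>v x) \<le> spec_norm H" by simp
  qed
  have "(\<Sum>i<a. \<Sum>j<b'. (?K $$ (i,j))\<^sup>2) = (\<Sum>i<a. \<Sum>j<b'. if j < b then (H $$ (i,j))\<^sup>2 else 0)"
    by (intro sum.cong) auto
  also have "\<dots> \<le> (\<Sum>i<a. \<Sum>j<b. (H $$ (i,j))\<^sup>2)" by (intro sum_mono sum_pad_le) simp
  finally show "frob_norm ?K \<le> frob_norm H" using H by (simp add: frob_norm_def)
qed
lemma mult_diag_right:
  assumes H: "H \<in> carrier_mat a b" and i: "i < a" and j: "j < c"
  shows "(H * rect_diag b c d)$$(i,j) = (if j < b then H$$(i,j) * d j else 0)"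
proof -
  have "(H * rect_diag b c d)$$(i,j) = (\<Sum>k = 0..<b. H $$ (i, k) * (if k = j then d k else 0))"
    using H i j by (simp add: rect_diag_def scalar_prod_def row_def col_def)
  also have "\<dots> = (\<Sum>k\<in>{0..<b}. if k = j then H$$(i,k) * d k else 0)"
    by (rule sum.cong) auto
  also have "\<dots> = (if j < b then H$$(i,j) * d j else 0)" by (simp add: sum.delta')
  finally show ?thesis .
qed

lemma mult_diag_left:
  assumes H: "H \<in> carrier_mat b c" and i: "i < a" and j: "j < c"
  shows "(rect_diag a b d * H)$$(i,j) = (if i < b then d i * H$$(i,j) else 0)"
proof -
  have "(rect_diag a b d * H)$$(i,j) = (\<Sum>k = 0..<b. (if i = k then d i else 0) * H $$ (k, j))"
    using H i j by (simp add: rect_diag_def scalar_prod_def row_def col_def)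
  also have "\<dots> = (\<Sum>k\<in>{0..<b}. if i = k then d i * H$$(k,j) else 0)"
    by (rule sum.cong) auto
  also have "\<dots> = (if i < b then d i * H$$(i,j) else 0)" by (simp add: sum.delta)
  finally show ?thesis .
qed

lemma mult_diagT_right:
  assumes H: "H \<in> carrier_mat a b" and i: "i < a" and j: "j < c"
  shows "(H * transpose_mat (rect_diag c b d))$$(i,j) = (if j < b then H$$(i,j) * d j else 0)"
proof -
  have "(H * transpose_mat (rect_diag c b d))$$(i,j) = (\<Sum>k = 0..<b. H $$ (i, k) * (if j = k then d j else 0))"
    using H i j by (simp add: rect_diag_def scalar_prod_def row_def col_def)
  also have "\<dots> = (\<Sum>k\<in>{0..<b}. if j = k then H$$(i,k) * d j else 0)"
    by (rule sum.cong) auto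
  also have "\<dots> = (if j < b then H$$(i,j) * d j else 0)" by (simp add: sum.delta)
  finally show ?thesis .
qed

lemma geo_gen:
  fixes a b u v :: real
  assumes "0 \<le> a" "a < b"
  shows "(\<lambda>k. (u * a^(2*k)) * (v / b^(2*k+2))) sums (u * v / (b\<^sup>2 - a\<^sup>2))"
proof -
  have b: "0 < b" using assms by linarith
  have "a\<^sup>2 < b\<^sup>2" using assms by (intro power_strict_mono) auto
  then have q: "norm (a\<^sup>2 / b\<^sup>2) < 1" using b by (simp add: divide_less_eq)
  have S: "(\<lambda>k. (u * v / b\<^sup>2) * (a\<^sup>2 / b\<^sup>2)^k) sums ((u * v / b\<^sup>2) * (1 / (1 - a\<^sup>2 / b\<^sup>2)))"
    by (intro sums_mult geometric_sums q)
  have eq1: "(u * v / b\<^sup>2) * (1 / (1 - a\<^sup>2 / b\<^sup>2)) = u * v / (b\<^sup>2 - a\<^sup>2)"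
    using b assms by (simp add: field_simps)
  have eq2: "(\<lambda>k. (u * v / b\<^sup>2) * (a\<^sup>2 / b\<^sup>2)^k) = (\<lambda>k. (u * a^(2*k)) * (v / b^(2*k+2)))"
  proof
    fix k
    have e: "a^(2*k) = (a\<^sup>2)^k" by (simp add: power_mult)
    have e2: "b^(2*k+2) = (b\<^sup>2)^k * b\<^sup>2" by (simp add: power_mult power_add power2_eq_square)
    show "(u * v / b\<^sup>2) * (a\<^sup>2 / b\<^sup>2)^k = (u * a^(2*k)) * (v / b^(2*k+2))"
      unfolding e e2 using b by (simp add: power_divide field_simps)
  qed
  show ?thesis using S unfolding eq1 eq2 .
qed

lemma geo_gen2:
  fixes a b u v :: real
  assumes "0 \<le> a" "a < b"
  shows "(\<lambda>k. (v / b^(2*k+2)) * (u * a^(2*k))) sums (u * v / (b\<^sup>2 - a\<^sup>2))"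
  using geo_gen[OF assms, of u v] by (simp add: mult.commute)

lemma inv_pow_mono:
  fixes b beta :: real
  assumes "0 < beta" "beta \<le> b"
  shows "1 / b^n \<le> 1 / beta^n"
  using assms by (intro divide_left_mono power_mono) auto

lemma b_pow_mono:
  fixes b beta :: real
  assumes "0 < beta" "beta \<le> b"
  shows "b / b^(2*k+2) \<le> beta / beta^(2*k+2)"
proof -
  have e1: "b / b^(2*k+2) = 1 / b^(Suc (2*k))" using assms by (simp add: field_simps)
  have e2: "beta / beta^(2*k+2) = 1 / beta^(Suc (2*k))" using assms by (simp add: field_simps)
  show ?thesis unfolding e1 e2 by (rule inv_pow_mono[OF assms])
qed
theorem lemma2p5:
  fixes A dA H1 H2 H3 H4 :: "real mat" and n m r :: nat and s st :: "nat \<Rightarrow> real"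
  assumes "A \<in> carrier_mat n m" and "dA \<in> carrier_mat n m"
    and "1 \<le> r" and "r < min n m"
    and "singular_values_of A s" and "singular_values_of (A + dA) st"
    and "s r - st (r + 1) > 0" and "st r - s (r + 1) > 0"
    and "H1 \<in> carrier_mat (n - r) r" and "H2 \<in> carrier_mat (m - r) r"
    and "H3 \<in> carrier_mat r (m - r)" and "H4 \<in> carrier_mat r (n - r)"
  shows
    "let B1 = hadamard (FU21 n r s st) (H1 * Sig1 r st);
         B2 = hadamard (FU21 n r s st) (Sig2 n m r s * H2);
         B3 = hadamard (FU12 n r s st) (H3 * transpose_mat (Sig2 n m r st));
         B4 = hadamard (FU12 n r s st) (Sig1 r s * H4);
         c1 = st r / ((st r)\<^sup>2 - (s (r+1))\<^sup>2);
         c2 = s (r+1) / ((st r)\<^sup>2 - (s (r+1))\<^sup>2);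
         c3 = st (r+1) / ((s r)\<^sup>2 - (st (r+1))\<^sup>2);
         c4 = s r / ((s r)\<^sup>2 - (st (r+1))\<^sup>2)
     in frob_norm B1 \<le> c1 * frob_norm H1 \<and> spec_norm B1 \<le> c1 * spec_norm H1 \<and>
        frob_norm B2 \<le> c2 * frob_norm H2 \<and> spec_norm B2 \<le> c2 * spec_norm H2 \<and>
        frob_norm B3 \<le> c3 * frob_norm H3 \<and> spec_norm B3 \<le> c3 * spec_norm H3 \<and>
        frob_norm B4 \<le> c4 * frob_norm H4 \<and> spec_norm B4 \<le> c4 * spec_norm H4"
proof -
  have r: "r < n" "r < m" "0 < r" using assms(3,4) by auto
  from assms(5) have sdec: "\<And>i j. 1 \<le> i \<Longrightarrow> i \<le> j \<Longrightarrow> s j \<le> s i"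
    and s0: "\<And>i. 1 \<le> i \<Longrightarrow> 0 \<le> s i"
    unfolding singular_values_of_def Let_def by blast+
  from assms(6) have tdec: "\<And>i j. 1 \<le> i \<Longrightarrow> i \<le> j \<Longrightarrow> st j \<le> st i"
    and t0: "\<And>i. 1 \<le> i \<Longrightarrow> 0 \<le> st i"
    unfolding singular_values_of_def Let_def by blast+
  have gap1: "s (r+1) < st r" using assms(8) by simp
  have gap3: "st (r+1) < s r" using assms(7) by simp
  have al1: "0 \<le> s (r+1)" by (rule s0) simp
  have al3: "0 \<le> st (r+1)" by (rule t0) simp
  have be1: "0 < st r" using gap1 al1 by linarith
  have be3: "0 < s r" using gap3 al3 by linarith
  have a1: "0 \<le> s (r+i+1)" "s (r+i+1) \<le> s (r+1)" for i
    by (rule s0, simp) (rule sdec, auto)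
  have b1: "st r \<le> st (j+1)" if "j < r" for j
    by (rule tdec) (use that in auto)
  have a3: "0 \<le> st (r+j+1)" "st (r+j+1) \<le> st (r+1)" for j
    by (rule t0, simp) (rule tdec, auto)
  have b3: "s r \<le> s (i+1)" if "i < r" for i
    by (rule sdec) (use that in auto)
  have lt1: "s (r+i+1) < st (j+1)" if "j < r" for i j
    using a1(2)[of i] gap1 b1[OF that] by linarith
  have lt3: "st (r+j+1) < s (i+1)" if "i < r" for i j
    using a3(2)[of j] gap3 b3[OF that] by linarith
  have sq: "x\<^sup>2 < y\<^sup>2" if "0 \<le> x" "x < y" for x y :: real
    using that by (intro power_strict_mono) auto

  have h1: "frob_norm (hadamard (FU21 n r s st) (H1 * Sig1 r st)) \<le> (1 * st r / ((st r)\<^sup>2 - (s (r+1))\<^sup>2)) * frob_norm H1 \<and>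
            spec_norm (hadamard (FU21 n r s st) (H1 * Sig1 r st)) \<le> (1 * st r / ((st r)\<^sup>2 - (s (r+1))\<^sup>2)) * spec_norm H1"
  proof (rule core[where a="n-r" and b=r
        and p="\<lambda>k i. 1 * s (r+i+1)^(2*k)" and q="\<lambda>k j. st (j+1) / st (j+1)^(2*k+2)"
        and g="\<lambda>i j. 1 * st (j+1) / ((st (j+1))\<^sup>2 - (s (r+i+1))\<^sup>2)"
        and P="\<lambda>k. 1 * s (r+1)^(2*k)" and Q="\<lambda>k. st r / st r^(2*k+2)"])
    show "H1 \<in> carrier_mat (n - r) r" by (rule assms(9))
    show "hadamard (FU21 n r s st) (H1 * Sig1 r st) \<in> carrier_mat (n - r) r"
      by (simp add: hadamard_def FU21_def)
    show "0 < r" by (rule r(3))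
    show "(\<lambda>k. 1 * s (r+i+1)^(2*k) * (st (j+1) / st (j+1)^(2*k+2))) sums (1 * st (j+1) / ((st (j+1))\<^sup>2 - (s (r+i+1))\<^sup>2))"
      if "i < n - r" "j < r" for i j
      by (rule geo_gen[OF a1(1) lt1[OF that(2)]])
    show "hadamard (FU21 n r s st) (H1 * Sig1 r st) $$ (i,j) = 1 * st (j+1) / ((st (j+1))\<^sup>2 - (s (r+i+1))\<^sup>2) * H1 $$ (i,j)"
      if "i < n - r" "j < r" for i j
    proof -
      have "(H1 * Sig1 r st) $$ (i,j) = H1 $$ (i,j) * st (j+1)"
        unfolding Sig1_def using mult_diag_right[OF assms(9) that] that by simp
      then show ?thesis using that by (simp add: hadamard_def FU21_def)
    qed
    show "\<bar>1 * s (r+i+1)^(2*k)\<bar> \<le> 1 * s (r+1)^(2*k)" for k i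
      using a1[of i] by (simp add: power_mono)
    show "\<bar>st (j+1) / st (j+1)^(2*k+2)\<bar> \<le> st r / st r^(2*k+2)" if "j < r" for k j
      using b_pow_mono[OF be1 b1[OF that], of k] be1 b1[OF that] by simp
    show "0 \<le> 1 * s (r+1)^(2*k)" for k using al1 by simp
    show "(\<lambda>k. 1 * s (r+1)^(2*k) * (st r / st r^(2*k+2))) sums (1 * st r / ((st r)\<^sup>2 - (s (r+1))\<^sup>2))"
      by (rule geo_gen[OF al1 gap1])
    show "0 \<le> 1 * st r / ((st r)\<^sup>2 - (s (r+1))\<^sup>2)" using be1 sq[OF al1 gap1] by simp
  qed

  define K2 where "K2 = mat (n-r) r (\<lambda>(i,j). if i < m - r then H2$$(i,j) else 0)"
  have K2: "K2 \<in> carrier_mat (n-r) r" by (simp add: K2_def)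
  have h2': "frob_norm (hadamard (FU21 n r s st) (Sig2 n m r s * H2)) \<le> (s (r+1) * 1 / ((st r)\<^sup>2 - (s (r+1))\<^sup>2)) * frob_norm K2 \<and>
            spec_norm (hadamard (FU21 n r s st) (Sig2 n m r s * H2)) \<le> (s (r+1) * 1 / ((st r)\<^sup>2 - (s (r+1))\<^sup>2)) * spec_norm K2"
  proof (rule core[where a="n-r" and b=r
        and p="\<lambda>k i. s (r+i+1) * s (r+i+1)^(2*k)" and q="\<lambda>k j. 1 / st (j+1)^(2*k+2)"
        and g="\<lambda>i j. s (r+i+1) * 1 / ((st (j+1))\<^sup>2 - (s (r+i+1))\<^sup>2)"
        and P="\<lambda>k. s (r+1) * s (r+1)^(2*k)" and Q="\<lambda>k. 1 / st r^(2*k+2)"])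
    show "K2 \<in> carrier_mat (n - r) r" by (rule K2)
    show "hadamard (FU21 n r s st) (Sig2 n m r s * H2) \<in> carrier_mat (n - r) r"
      by (simp add: hadamard_def FU21_def)
    show "0 < r" by (rule r(3))
    show "(\<lambda>k. s (r+i+1) * s (r+i+1)^(2*k) * (1 / st (j+1)^(2*k+2))) sums (s (r+i+1) * 1 / ((st (j+1))\<^sup>2 - (s (r+i+1))\<^sup>2))"
      if "i < n - r" "j < r" for i j
      by (rule geo_gen[OF a1(1) lt1[OF that(2)]])
    show "hadamard (FU21 n r s st) (Sig2 n m r s * H2) $$ (i,j) = s (r+i+1) * 1 / ((st (j+1))\<^sup>2 - (s (r+i+1))\<^sup>2) * K2 $$ (i,j)"
      if "i < n - r" "j < r" for i j
    proof -
      have "(Sig2 n m r s * H2) $$ (i,j) = (if i < m - r then s (r+i+1) * H2 $$ (i,j) else 0)"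
        unfolding Sig2_def using mult_diag_left[OF assms(10) that] by simp
      then show ?thesis using that by (simp add: hadamard_def FU21_def K2_def)
    qed
    show "\<bar>s (r+i+1) * s (r+i+1)^(2*k)\<bar> \<le> s (r+1) * s (r+1)^(2*k)" for k i
      using a1[of i] by (simp add: abs_mult power_mono mult_mono)
    show "\<bar>1 / st (j+1)^(2*k+2)\<bar> \<le> 1 / st r^(2*k+2)" if "j < r" for k j
      using inv_pow_mono[OF be1 b1[OF that], of "2*k+2"] be1 b1[OF that] by simp
    show "0 \<le> s (r+1) * s (r+1)^(2*k)" for k using al1 by simp
    show "(\<lambda>k. s (r+1) * s (r+1)^(2*k) * (1 / st r^(2*k+2))) sums (s (r+1) * 1 / ((st r)\<^sup>2 - (s (r+1))\<^sup>2))"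
      by (rule geo_gen[OF al1 gap1])
    show "0 \<le> s (r+1) * 1 / ((st r)\<^sup>2 - (s (r+1))\<^sup>2)" using al1 sq[OF al1 gap1] by simp
  qed
  have c2: "0 \<le> s (r+1) / ((st r)\<^sup>2 - (s (r+1))\<^sup>2)" using al1 sq[OF al1 gap1] by simp
  have pK2: "spec_norm K2 \<le> spec_norm H2 \<and> frob_norm K2 \<le> frob_norm H2"
    unfolding K2_def using pad_rows[OF assms(10), of "n-r"] r by simp
  have h2: "frob_norm (hadamard (FU21 n r s st) (Sig2 n m r s * H2)) \<le> (s (r+1) / ((st r)\<^sup>2 - (s (r+1))\<^sup>2)) * frob_norm H2 \<and>
            spec_norm (hadamard (FU21 n r s st) (Sig2 n m r s * H2)) \<le> (s (r+1) / ((st r)\<^sup>2 - (s (r+1))\<^sup>2)) * spec_norm H2"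
    using h2' pK2 mult_left_mono[OF _ c2, of "frob_norm K2" "frob_norm H2"]
      mult_left_mono[OF _ c2, of "spec_norm K2" "spec_norm H2"] by simp

  define K3 where "K3 = mat r (n-r) (\<lambda>(i,j). if j < m - r then H3$$(i,j) else 0)"
  have K3: "K3 \<in> carrier_mat r (n-r)" by (simp add: K3_def)
  have h3': "frob_norm (hadamard (FU12 n r s st) (H3 * transpose_mat (Sig2 n m r st))) \<le> (st (r+1) * 1 / ((s r)\<^sup>2 - (st (r+1))\<^sup>2)) * frob_norm K3 \<and>
            spec_norm (hadamard (FU12 n r s st) (H3 * transpose_mat (Sig2 n m r st))) \<le> (st (r+1) * 1 / ((s r)\<^sup>2 - (st (r+1))\<^sup>2)) * spec_norm K3"
  proof (rule core[where a=r and b="n-r"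
        and p="\<lambda>k i. (-1) / s (i+1)^(2*k+2)" and q="\<lambda>k j. st (r+j+1) * st (r+j+1)^(2*k)"
        and g="\<lambda>i j. st (r+j+1) * (-1) / ((s (i+1))\<^sup>2 - (st (r+j+1))\<^sup>2)"
        and P="\<lambda>k. 1 / s r^(2*k+2)" and Q="\<lambda>k. st (r+1) * st (r+1)^(2*k)"])
    show "K3 \<in> carrier_mat r (n - r)" by (rule K3)
    show "hadamard (FU12 n r s st) (H3 * transpose_mat (Sig2 n m r st)) \<in> carrier_mat r (n - r)"
      by (simp add: hadamard_def FU12_def)
    show "0 < n - r" using r by simp
    show "(\<lambda>k. (-1) / s (i+1)^(2*k+2) * (st (r+j+1) * st (r+j+1)^(2*k))) sums (st (r+j+1) * (-1) / ((s (i+1))\<^sup>2 - (st (r+j+1))\<^sup>2))"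
      if "i < r" "j < n - r" for i j
      by (rule geo_gen2[OF a3(1) lt3[OF that(1)]])
    show "hadamard (FU12 n r s st) (H3 * transpose_mat (Sig2 n m r st)) $$ (i,j) = st (r+j+1) * (-1) / ((s (i+1))\<^sup>2 - (st (r+j+1))\<^sup>2) * K3 $$ (i,j)"
      if "i < r" "j < n - r" for i j
    proof -
      have "(H3 * transpose_mat (Sig2 n m r st)) $$ (i,j) = (if j < m - r then H3 $$ (i,j) * st (r+j+1) else 0)"
        unfolding Sig2_def using mult_diagT_right[OF assms(11) that] by simp
      moreover have "(s (i+1))\<^sup>2 - (st (r+j+1))\<^sup>2 \<noteq> 0" "(st (r+j+1))\<^sup>2 - (s (i+1))\<^sup>2 \<noteq> 0"
        using sq[OF a3(1) lt3[OF that(1), of j]] by auto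
      ultimately show ?thesis using that by (auto simp: hadamard_def FU12_def K3_def field_simps)
    qed
    show "\<bar>(-1) / s (i+1)^(2*k+2)\<bar> \<le> 1 / s r^(2*k+2)" if "i < r" for k i
      using inv_pow_mono[OF be3 b3[OF that], of "2*k+2"] be3 b3[OF that] by simp
    show "\<bar>st (r+j+1) * st (r+j+1)^(2*k)\<bar> \<le> st (r+1) * st (r+1)^(2*k)" for k j
      using a3[of j] by (simp add: abs_mult power_mono mult_mono)
    show "0 \<le> 1 / s r^(2*k+2)" for k using be3 by simp
    show "(\<lambda>k. 1 / s r^(2*k+2) * (st (r+1) * st (r+1)^(2*k))) sums (st (r+1) * 1 / ((s r)\<^sup>2 - (st (r+1))\<^sup>2))"
      by (rule geo_gen2[OF al3 gap3])
    show "0 \<le> st (r+1) * 1 / ((s r)\<^sup>2 - (st (r+1))\<^sup>2)" using al3 sq[OF al3 gap3] by simp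
  qed
  have c3: "0 \<le> st (r+1) / ((s r)\<^sup>2 - (st (r+1))\<^sup>2)" using al3 sq[OF al3 gap3] by simp
  have pK3: "spec_norm K3 \<le> spec_norm H3 \<and> frob_norm K3 \<le> frob_norm H3"
    unfolding K3_def using pad_cols[OF assms(11), of "n-r"] r by simp
  have h3: "frob_norm (hadamard (FU12 n r s st) (H3 * transpose_mat (Sig2 n m r st))) \<le> (st (r+1) / ((s r)\<^sup>2 - (st (r+1))\<^sup>2)) * frob_norm H3 \<and>
            spec_norm (hadamard (FU12 n r s st) (H3 * transpose_mat (Sig2 n m r st))) \<le> (st (r+1) / ((s r)\<^sup>2 - (st (r+1))\<^sup>2)) * spec_norm H3"
    using h3' pK3 mult_left_mono[OF _ c3, of "frob_norm K3" "frob_norm H3"]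
      mult_left_mono[OF _ c3, of "spec_norm K3" "spec_norm H3"] by simp

  have h4: "frob_norm (hadamard (FU12 n r s st) (Sig1 r s * H4)) \<le> (1 * s r / ((s r)\<^sup>2 - (st (r+1))\<^sup>2)) * frob_norm H4 \<and>
            spec_norm (hadamard (FU12 n r s st) (Sig1 r s * H4)) \<le> (1 * s r / ((s r)\<^sup>2 - (st (r+1))\<^sup>2)) * spec_norm H4"
  proof (rule core[where a=r and b="n-r"
        and p="\<lambda>k i. - s (i+1) / s (i+1)^(2*k+2)" and q="\<lambda>k j. 1 * st (r+j+1)^(2*k)"
        and g="\<lambda>i j. 1 * (- s (i+1)) / ((s (i+1))\<^sup>2 - (st (r+j+1))\<^sup>2)"
        and P="\<lambda>k. s r / s r^(2*k+2)" and Q="\<lambda>k. 1 * st (r+1)^(2*k)"])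
    show "H4 \<in> carrier_mat r (n - r)" by (rule assms(12))
    show "hadamard (FU12 n r s st) (Sig1 r s * H4) \<in> carrier_mat r (n - r)"
      by (simp add: hadamard_def FU12_def)
    show "0 < n - r" using r by simp
    show "(\<lambda>k. - s (i+1) / s (i+1)^(2*k+2) * (1 * st (r+j+1)^(2*k))) sums (1 * (- s (i+1)) / ((s (i+1))\<^sup>2 - (st (r+j+1))\<^sup>2))"
      if "i < r" "j < n - r" for i j
      by (rule geo_gen2[OF a3(1) lt3[OF that(1)]])
    show "hadamard (FU12 n r s st) (Sig1 r s * H4) $$ (i,j) = 1 * (- s (i+1)) / ((s (i+1))\<^sup>2 - (st (r+j+1))\<^sup>2) * H4 $$ (i,j)"
      if "i < r" "j < n - r" for i j
    proof -
      have "(Sig1 r s * H4) $$ (i,j) = s (i+1) * H4 $$ (i,j)"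
        unfolding Sig1_def using mult_diag_left[OF assms(12) that] that by simp
      moreover have "(s (i+1))\<^sup>2 - (st (r+j+1))\<^sup>2 \<noteq> 0" "(st (r+j+1))\<^sup>2 - (s (i+1))\<^sup>2 \<noteq> 0"
        using sq[OF a3(1) lt3[OF that(1), of j]] by auto
      ultimately show ?thesis using that by (auto simp: hadamard_def FU12_def field_simps)
    qed
    show "\<bar>- s (i+1) / s (i+1)^(2*k+2)\<bar> \<le> s r / s r^(2*k+2)" if "i < r" for k i
      using b_pow_mono[OF be3 b3[OF that], of k] be3 b3[OF that] by simp
    show "\<bar>1 * st (r+j+1)^(2*k)\<bar> \<le> 1 * st (r+1)^(2*k)" for k j
      using a3[of j] by (simp add: power_mono)
    show "0 \<le> s r / s r^(2*k+2)" for k using be3 by simp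
    show "(\<lambda>k. s r / s r^(2*k+2) * (1 * st (r+1)^(2*k))) sums (1 * s r / ((s r)\<^sup>2 - (st (r+1))\<^sup>2))"
      by (rule geo_gen2[OF al3 gap3])
    show "0 \<le> 1 * s r / ((s r)\<^sup>2 - (st (r+1))\<^sup>2)" using be3 sq[OF al3 gap3] by simp
  qed
  show ?thesis unfolding Let_def using h1 h2 h3 h4 by simp
qed
end
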